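(* Let $\mathbf{x}=(\ldots,x_{-1},x_0,x_1,\ldots)$ be commuting indeterminates indexed by $\mathbb{Z}$. Let $T=(t_{ij})$ be an $\mathbb{N}$-tableau of shape $\lambda$ and let $\widehat{T}$ be its image under the toggle map defined in the context. Then \[|\widehat{T}|_{\mathbf{x}}=\sum_{(i,j)\in\lambda}t_{ij}\,h_{\lambda}(i,j;\mathbf{x}).\]
   Context: Partitions are drawn in English notation with matrix coordinates: the box in row $i$ and column $j$ is $(i,j)$. An $\mathbb{N}$-tableau of shape $\lambda$ is an assignment of a nonnegative integer to each box of $\lambda$. The hook $H_\lambda(i,j)$ is the set of boxes $(i,j')\in\lambda$ with $j'\ge j$ together with the boxes $(i',j)\in\lambda$ with $i'\ge i$. The $\mathbf{x}$-hook-length is $h_\lambda(i,j;\mathbf{x})=\sum_{(i',j')\in H_\lambda(i,j)}x_{j'-i'}$, and the $\mathbf{x}$-weight of an $\mathbb{N}$-tableau $S=(s_{ij})$ of shape $\lambda$ is $|S|_{\mathbf{x}}=\sum_{(i,j)\in\lambda}s_{ij}x_{j-i}$. A corner box is a box $(i,j)$ such that neither $(i+1,j)$ nor $(i,j+1)$ is a box. The toggle map $T\mapsto\widehat{T}$ is defined recursively: $\widehat{\emptyset}=\emptyset$; if $T'$ is obtained from $T$ by adding a corner box $(i,j)$ (of $\mathrm{sh}(T')$) with entry $x$, then $\widehat{T'}$ is obtained from $\widehat{T}$ as follows. For $k\ge1$ let $\beta_k,\gamma_k,\alpha_k$ be the entries of $\widehat{T}$ at $(i-k,j-k)$, $(i-k+1,j-k)$,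 $(i-k,j-k+1)$ respectively (taken to be $0$ if the box is not in $\mathrm{sh}(T)$). Then $\widehat{T'}$ agrees with $\widehat{T}$ except that for $1\le k<\min(i,j)$ the entry at $(i-k,j-k)$ becomes $\max(\alpha_{k+1},\gamma_{k+1})+\min(\alpha_k,\gamma_k)-\beta_k$, and the entry at $(i,j)$ is $\max(\alpha_1,\gamma_1)+x$. This is independent of the order in which boxes are added. *)

theory Defs
  imports Main
begin

text \<open>Boxes are pairs (i,j) of a row index i >= 1 and a column index j >= 1 (matrix
coordinates, English notation).\<close>

definition young_diagram :: "(nat \<times> nat) set \<Rightarrow> bool" where
  "young_diagram S \<longleftrightarrow> finite S \<and> (\<forall>(i,j)\<in>S. 1 \<le> i \<and> 1 \<le> j) \<and>
     (\<forall>i j i' j'. (i,j) \<in> S \<longrightarrow> 1 \<le> i' \<longrightarrow> i' \<le> i \<longrightarrow> 1 \<le> j' \<longrightarrow> j' \<le> j \<longrightarrow> (i',j') \<in> S)"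

definition corner_box :: "(nat \<times> nat) set \<Rightarrow> nat \<times> nat \<Rightarrow> bool" where
  "corner_box S b \<longleftrightarrow> b \<in> S \<and> (fst b + 1, snd b) \<notin> S \<and> (fst b, snd b + 1) \<notin> S"

definition hook :: "(nat \<times> nat) set \<Rightarrow> nat \<times> nat \<Rightarrow> (nat \<times> nat) set" where
  "hook S b = {(i',j') \<in> S. i' = fst b \<and> j' \<ge> snd b} \<union> {(i',j') \<in> S. j' = snd b \<and> i' \<ge> fst b}"

definition content :: "nat \<times> nat \<Rightarrow> int" where
  "content b = int (snd b) - int (fst b)"

definition hook_length :: "(nat \<times> nat) set \<Rightarrow> nat \<times> nat \<Rightarrow> (int \<Rightarrow> 'a::comm_ring_1) \<Rightarrow> 'a" where
  "hook_length S b x = (\<Sum>c\<in>hook S b. x (content c))"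

definition xweight :: "(nat \<times> nat) set \<Rightarrow> (nat \<times> nat \<Rightarrow> int) \<Rightarrow> (int \<Rightarrow> 'a::comm_ring_1) \<Rightarrow> 'a" where
  "xweight S U x = (\<Sum>b\<in>S. of_int (U b) * x (content b))"

text \<open>One step of the toggle map: Th is the image of T (shape S), and the box (i,j)
with entry e is added. Entries of Th outside S are read as 0.\<close>

definition toggle_step :: "(nat \<times> nat) set \<Rightarrow> (nat \<times> nat \<Rightarrow> int) \<Rightarrow> nat \<times> nat \<Rightarrow> int \<Rightarrow> (nat \<times> nat \<Rightarrow> int)" where
  "toggle_step S Th b e =
    (let i = fst b; j = snd b;
         ent = (\<lambda>q. if q \<in> S then Th q else 0);
         \<beta> = (\<lambda>k. ent (i - k, j - k));
         \<gamma> = (\<lambda>k. ent (i - k + 1, j - k));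
         \<alpha> = (\<lambda>k. ent (i - k, j - k + 1))
     in (\<lambda>p. if p = (i, j) then max (\<alpha> 1) (\<gamma> 1) + e
             else if (\<exists>k. 1 \<le> k \<and> k < min i j \<and> p = (i - k, j - k))
               then (let k = i - fst p in max (\<alpha> (k+1)) (\<gamma> (k+1)) + min (\<alpha> k) (\<gamma> k) - \<beta> k)
             else Th p))"

text \<open>toggle S T Th: Th is (the image under the toggle map of) the tableau T restricted to
shape S, computed by adding the boxes of S one corner at a time in any admissible order.\<close>

inductive toggle :: "(nat \<times> nat) set \<Rightarrow> (nat \<times> nat \<Rightarrow> nat) \<Rightarrow> (nat \<times> nat \<Rightarrow> int) \<Rightarrow> bool" where
  toggle_empty: "toggle {} T (\<lambda>_. 0)"
| toggle_add: "\<lbrakk> toggle S T Th; young_diagram S; b \<notin> S; young_diagram (insert b S);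
                 corner_box (insert b S) b \<rbrakk>
               \<Longrightarrow> toggle (insert b S) T (toggle_step S Th b (int (T b)))"

end

theory Submission
  imports Defs
begin


definition diagsum :: "(nat \<times> nat \<Rightarrow> int) \<Rightarrow> nat \<Rightarrow> nat \<Rightarrow> int" where
  "diagsum Th p q = (\<Sum>k<min p q. Th (p-k, q-k))"

definition rect :: "(nat \<times> nat \<Rightarrow> nat) \<Rightarrow> nat \<Rightarrow> nat \<Rightarrow> int" where
  "rect T p q = (\<Sum>r\<in>{1..p}\<times>{1..q}. int (T r))"

definition tinv :: "(nat \<times> nat) set \<Rightarrow> (nat \<times> nat \<Rightarrow> nat) \<Rightarrow> (nat \<times> nat \<Rightarrow> int) \<Rightarrow> bool" where
  "tinv S T Th \<longleftrightarrow> (\<forall>q. q \<notin> S \<longrightarrow> Th q = 0) \<and> (\<forall>q. 0 \<le> Th q) \<and>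
     (\<forall>p q. (p, Suc q) \<in> S \<longrightarrow> Th (p,q) \<le> Th (p, Suc q)) \<and>
     (\<forall>p q. (Suc p, q) \<in> S \<longrightarrow> Th (p,q) \<le> Th (Suc p, q)) \<and>
     (\<forall>p q. (p,q) \<in> S \<longrightarrow> (Suc p, Suc q) \<notin> S \<longrightarrow> diagsum Th p q = rect T p q)"

lemma yd_closed: "young_diagram S \<Longrightarrow> (a,b) \<in> S \<Longrightarrow> 1 \<le> a' \<Longrightarrow> a' \<le> a \<Longrightarrow> 1 \<le> b' \<Longrightarrow> b' \<le> b \<Longrightarrow> (a',b') \<in> S"
  unfolding young_diagram_def by blast
lemma yd_pos: "young_diagram S \<Longrightarrow> (a,b) \<in> S \<Longrightarrow> 1 \<le> a \<and> 1 \<le> b"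
  unfolding young_diagram_def by blast

lemma diagsum_ext:
  assumes "\<forall>a. Th (0,a) = 0" "\<forall>a. Th (a,0) = 0" "min p q \<le> n"
  shows "(\<Sum>k<n. Th (p-k, q-k)) = diagsum Th p q"
proof -
  have z: "Th (p-k, q-k) = 0" if "min p q \<le> k" for k
  proof (cases "p \<le> q")
    case True then have "p - k = 0" using that by auto
    then show ?thesis using assms(1) by simp
  next
    case False then have "q - k = 0" using that by auto
    then show ?thesis using assms(2) by simp
  qed
  have "(\<Sum>k<n. Th (p-k, q-k)) = (\<Sum>k<min p q. Th (p-k, q-k))"
    by (rule sum.mono_neutral_right) (use assms(3) z in auto)
  then show ?thesis by (simp add: diagsum_def)
qed

lemma diagsum_zero: "p = 0 \<or> q = 0 \<Longrightarrow> diagsum Th p q = 0"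
  by (auto simp: diagsum_def)

lemma rect_zero: "p = 0 \<or> q = 0 \<Longrightarrow> rect T p q = 0"
  by (auto simp: rect_def)

lemma rect_rec:
  assumes "1 \<le> i" "1 \<le> j"
  shows "rect T i j = int (T (i,j)) + rect T (i-1) j + rect T i (j-1) - rect T (i-1) (j-1)"
proof -
  let ?g = "\<lambda>r. int (T r)"
  let ?A = "{1..i-1}\<times>{1..j}" and ?B = "{1..i}\<times>{1..j-1}"
  have e1: "{1..i}\<times>{1..j} = insert (i,j) (?A \<union> ?B)" using assms by auto
  have e2: "(i,j) \<notin> ?A \<union> ?B" by auto
  have e3: "?A \<inter> ?B = {1..i-1}\<times>{1..j-1}" by auto
  have "sum ?g (?A \<union> ?B) + sum ?g (?A \<inter> ?B) = sum ?g ?A + sum ?g ?B"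
    by (rule sum.union_inter) auto
  then show ?thesis unfolding rect_def e1 using e2 e3 by simp
qed

lemma rect_diff:
  "rect T i j - rect T (i-1) (j-1) = (\<Sum>r\<in>{1..i}\<times>{1..j} - {1..i-1}\<times>{1..j-1}. int (T r))"
  unfolding rect_def by (rule sum_diff[symmetric]) auto

lemma tele:
  fixes f M N B :: "nat \<Rightarrow> int"
  assumes "1 \<le> m" "\<forall>k<m. f k = M (Suc k) + (if k = 0 then e else N k - B k)"
  shows "(\<Sum>k<m. f k) = e + M m + (\<Sum>k\<in>{1..<m}. M k + N k - B k)"
  using assms
proof (induction m)
  case 0 then show ?case by simp
next
  case (Suc m)
  show ?case
  proof (cases "m = 0")
    case True then show ?thesis using Suc.prems by simp
  next
    case False
    then have ih: "(\<Sum>k<m. f k) = e + M m + (\<Sum>k\<in>{1..<m}. M k + N k - B k)"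
      using Suc by auto
    have "f m = M (Suc m) + N m - B m" using Suc.prems False by auto
    moreover have "{1..<Suc m} = insert m {1..<m}" using False by auto
    ultimately show ?thesis using ih by simp
  qed
qed



locale stepc =
  fixes S :: "(nat \<times> nat) set" and T :: "nat \<times> nat \<Rightarrow> nat" and Th :: "nat \<times> nat \<Rightarrow> int"
    and i j :: nat
  assumes YS: "young_diagram S" and YS': "young_diagram (insert (i,j) S)" and nb: "(i,j) \<notin> S"
    and cor: "corner_box (insert (i,j) S) (i,j)" and I: "tinv S T Th"
begin

definition "Th2 = toggle_step S Th (i,j) (int (T (i,j)))"
definition "Dg = (\<lambda>k. (i-k, j-k)) ` {..<min i j}"

lemma ij: "1 \<le> i" "1 \<le> j" using yd_pos[OF YS', of i j] by auto

lemma below: "1 \<le> a \<Longrightarrow> a \<le> i \<Longrightarrow> 1 \<le> c \<Longrightarrow> c \<le> j \<Longrightarrow> (a,c) \<in> insert (i,j) S"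
  using yd_closed[OF YS', of i j a c] by auto

lemma below_S: "1 \<le> a \<Longrightarrow> a \<le> i \<Longrightarrow> 1 \<le> c \<Longrightarrow> c \<le> j \<Longrightarrow> (a,c) \<noteq> (i,j) \<Longrightarrow> (a,c) \<in> S"
  using below by blast

lemma inS: "(a,c) \<in> S \<Longrightarrow> 1 \<le> a \<and> 1 \<le> c"
  using yd_pos[OF YS] by blast

lemma notabove: "(a,c) \<in> S \<Longrightarrow> i \<le> a \<Longrightarrow> j \<le> c \<Longrightarrow> False"
  using yd_closed[OF YS, of a c i j] nb ij by blast

lemma finS: "finite S" using YS by (simp add: young_diagram_def)

lemma cor1: "(Suc i, j) \<notin> insert (i,j) S" "(i, Suc j) \<notin> insert (i,j) S"
  using cor by (auto simp: corner_box_def)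

lemma zero_out: "q \<notin> S \<Longrightarrow> Th q = 0" using I unfolding tinv_def by blast
lemma nonneg: "0 \<le> Th q" using I unfolding tinv_def by blast
lemma mono_r: "(p, Suc q) \<in> S \<Longrightarrow> Th (p,q) \<le> Th (p, Suc q)" using I by (simp add: tinv_def)
lemma mono_c: "(Suc p, q) \<in> S \<Longrightarrow> Th (p,q) \<le> Th (Suc p, q)" using I by (simp add: tinv_def)
lemma rim: "(p,q) \<in> S \<Longrightarrow> (Suc p, Suc q) \<notin> S \<Longrightarrow> diagsum Th p q = rect T p q"
  using I by (simp add: tinv_def)

lemma Th0: "Th (0,a) = 0" "Th (a,0) = 0"
  by (rule zero_out, use inS in force)+

lemma ent: "(if q \<in> S then Th q else 0) = Th q" using zero_out by auto

lemma ts0: "Th2 (i,j) = max (Th (i-1, j)) (Th (i, j-1)) + int (T (i,j))"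
  using ij by (simp add: Th2_def toggle_step_def ent Let_def)

lemma tsk:
  assumes "1 \<le> k" "k < min i j"
  shows "Th2 (i-k, j-k) = max (Th (i - Suc k, j-k)) (Th (i-k, j - Suc k))
           + min (Th (i-k, Suc (j-k))) (Th (Suc (i-k), j-k)) - Th (i-k, j-k)"
proof -
  have ne: "(i-k, j-k) \<noteq> (i,j)" using assms by auto
  have ex: "\<exists>k'. 1 \<le> k' \<and> k' < min i j \<and> (i-k, j-k) = (i-k', j-k')" using assms by blast
  have kk: "i - (i-k) = k" using assms by auto
  have a1: "j - Suc k + 1 = j - k" "i - Suc k + 1 = i - k" "j - k + 1 = Suc (j-k)" "i - k + 1 = Suc (i - k)"
    "j - (k + 1) + 1 = j - k" "i - (k + 1) + 1 = i - k" "i - (k+1) = i - Suc k" "j - (k+1) = j - Suc k"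
    using assms by auto
  show ?thesis
    unfolding Th2_def toggle_step_def Let_def fst_conv snd_conv
    apply (subst if_not_P[OF ne])
    apply (subst if_P[OF ex])
    apply (simp only: kk fst_conv ent a1)
    done
qed

lemma tsoff: "q \<notin> Dg \<Longrightarrow> Th2 q = Th q"
proof -
  assume q: "q \<notin> Dg"
  have "(i,j) \<in> Dg" unfolding Dg_def by (rule image_eqI[of _ _ 0]) (use ij in auto)
  then have ne: "q \<noteq> (i,j)" using q by auto
  have ex: "\<not> (\<exists>k. 1 \<le> k \<and> k < min i j \<and> q = (i-k, j-k))" using q unfolding Dg_def by blast
  show ?thesis unfolding Th2_def toggle_step_def Let_def fst_conv snd_conv
    apply (subst if_not_P[OF ne])
    apply (subst if_not_P[OF ex])
    apply (rule refl)
    done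
qed

lemma Dg_sub: "Dg \<subseteq> insert (i,j) S"
proof
  fix q assume "q \<in> Dg"
  then obtain k where k: "k < min i j" "q = (i-k, j-k)" unfolding Dg_def by auto
  show "q \<in> insert (i,j) S" unfolding k(2) by (rule below) (use k in auto)
qed

lemma inj: "inj_on (\<lambda>k. (i-k, j-k)) {..<min i j}"
  by (auto simp: inj_on_def)

end


context stepc begin

lemma mpos: "1 \<le> min i j" using ij by auto

lemma Dg_mem: "q \<in> Dg \<longleftrightarrow> (\<exists>k<min i j. q = (i-k, j-k))"
  unfolding Dg_def by auto

lemma ij_Dg: "(i,j) \<in> Dg" unfolding Dg_mem by (rule exI[of _ 0]) (use ij in auto)

lemma rimA: "diagsum Th (i-1) j = rect T (i-1) j"
proof (cases "i = 1")
  case True then show ?thesis by (simp add: diagsum_zero rect_zero)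
next
  case False
  have "(i-1, j) \<in> S" by (rule below_S) (use False ij in auto)
  moreover have "(Suc (i-1), Suc j) \<notin> S" using cor1 False ij by auto
  ultimately show ?thesis by (rule rim)
qed

lemma rimB: "diagsum Th i (j-1) = rect T i (j-1)"
proof (cases "j = 1")
  case True then show ?thesis by (simp add: diagsum_zero rect_zero)
next
  case False
  have "(i, j-1) \<in> S" by (rule below_S) (use False ij in auto)
  moreover have "(Suc i, Suc (j-1)) \<notin> S" using cor1 False ij by auto
  ultimately show ?thesis by (rule rim)
qed

lemma rimC: "diagsum Th (i-1) (j-1) = rect T (i-1) (j-1)"
proof (cases "i = 1 \<or> j = 1")
  case True then show ?thesis by (auto simp: diagsum_zero rect_zero)
next
  case False
  have "(i-1, j-1) \<in> S" by (rule below_S) (use False ij in auto)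
  moreover have "(Suc (i-1), Suc (j-1)) \<notin> S" using nb False ij by auto
  ultimately show ?thesis by (rule rim)
qed

lemma diag_new: "(\<Sum>k<min i j. Th2 (i-k, j-k)) = rect T i j"
proof -
  define m where "m = min i j"
  define a where "a k = Th (i-k, Suc (j-k))" for k
  define g where "g k = Th (Suc (i-k), j-k)" for k
  define bt where "bt k = Th (i-k, j-k)" for k
  define M where "M k = max (a k) (g k)" for k
  define N where "N k = min (a k) (g k)" for k
  define e where "e = int (T (i,j))"
  have m1: "1 \<le> m" using mpos m_def by simp
  have f: "\<forall>k<m. Th2 (i-k, j-k) = M (Suc k) + (if k = 0 then e else N k - bt k)"
  proof (intro allI impI)
    fix k assume k: "k < m"
    show "Th2 (i-k, j-k) = M (Suc k) + (if k = 0 then e else N k - bt k)"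
    proof (cases "k = 0")
      case True
      have "M (Suc 0) = max (Th (i-1, j)) (Th (i, j-1))"
        unfolding M_def a_def g_def using ij by simp
      then show ?thesis using True ts0 e_def by simp
    next
      case False
      have e1: "Suc (j - Suc k) = j - k" "Suc (i - Suc k) = i - k" using k m_def by auto
      have "Th2 (i-k, j-k) = max (Th (i - Suc k, j-k)) (Th (i-k, j - Suc k))
           + min (Th (i-k, Suc (j-k))) (Th (Suc (i-k), j-k)) - Th (i-k, j-k)"
        by (rule tsk) (use False k m_def in auto)
      then show ?thesis using False unfolding M_def N_def a_def g_def bt_def e1 by simp
    qed
  qed
  have t: "(\<Sum>k<m. Th2 (i-k, j-k)) = e + M m + (\<Sum>k\<in>{1..<m}. M k + N k - bt k)"
    by (rule tele[OF m1 f])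
  have MN: "M k + N k - bt k = a k + g k - bt k" for k
    unfolding M_def N_def by simp
  have Mm: "M m = a m + g m - bt m"
  proof (cases "m = i")
    case True
    have "a m = 0" "bt m = 0" unfolding a_def bt_def using True Th0 by auto
    then show ?thesis unfolding M_def using nonneg[of "(Suc (i-m), j-m)"] g_def by simp
  next
    case False
    then have "m = j" using m_def by auto
    then have "g m = 0" "bt m = 0" unfolding g_def bt_def using Th0 by auto
    then show ?thesis unfolding M_def using nonneg[of "(i-m, Suc (j-m))"] a_def by simp
  qed
  have s1: "e + M m + (\<Sum>k\<in>{1..<m}. M k + N k - bt k) = e + (\<Sum>k\<in>{1..m}. a k + g k - bt k)"
  proof -
    have "{1..m} = insert m {1..<m}" using m1 by auto
    then have "(\<Sum>k\<in>{1..m}. a k + g k - bt k) = (a m + g m - bt m) + (\<Sum>k\<in>{1..<m}. a k + g k - bt k)"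
      by simp
    then show ?thesis using MN Mm by simp
  qed
  have s2: "(\<Sum>k\<in>{1..m}. a k + g k - bt k) = (\<Sum>k<m. a (Suc k)) + (\<Sum>k<m. g (Suc k)) - (\<Sum>k<m. bt (Suc k))"
    using sum.atLeast1_atMost_eq[of "\<lambda>k. a k + g k - bt k" m]
    by (simp add: sum.distrib sum_subtractf)
  have Th0': "\<forall>x. Th (0,x) = 0" "\<forall>x. Th (x,0) = 0" using Th0 by auto
  have sa: "(\<Sum>k<m. a (Suc k)) = diagsum Th (i-1) j"
  proof -
    have "(\<Sum>k<m. a (Suc k)) = (\<Sum>k<m. Th ((i-1)-k, j-k))"
      by (rule sum.cong) (auto simp: a_def m_def Suc_diff_Suc)
    also have "\<dots> = diagsum Th (i-1) j" by (rule diagsum_ext[OF Th0']) (auto simp: m_def)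
    finally show ?thesis .
  qed
  have sg: "(\<Sum>k<m. g (Suc k)) = diagsum Th i (j-1)"
  proof -
    have "(\<Sum>k<m. g (Suc k)) = (\<Sum>k<m. Th (i-k, (j-1)-k))"
      by (rule sum.cong) (auto simp: g_def m_def Suc_diff_Suc)
    also have "\<dots> = diagsum Th i (j-1)" by (rule diagsum_ext[OF Th0']) (auto simp: m_def)
    finally show ?thesis .
  qed
  have sb: "(\<Sum>k<m. bt (Suc k)) = diagsum Th (i-1) (j-1)"
  proof -
    have "(\<Sum>k<m. bt (Suc k)) = (\<Sum>k<m. Th ((i-1)-k, (j-1)-k))"
      by (rule sum.cong) (auto simp: bt_def m_def)
    also have "\<dots> = diagsum Th (i-1) (j-1)" by (rule diagsum_ext[OF Th0']) (auto simp: m_def)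
    finally show ?thesis .
  qed
  show ?thesis
    using t s1 s2 sa sg sb rimA rimB rimC rect_rec[OF ij, of T] m_def e_def by simp
qed

lemma diag_old: "(\<Sum>k<min i j. Th (i-k, j-k)) = rect T (i-1) (j-1)"
proof -
  obtain m' where m': "min i j = Suc m'" using mpos by (metis Suc_le_D One_nat_def)
  have Th0': "\<forall>x. Th (0,x) = 0" "\<forall>x. Th (x,0) = 0" using Th0 by auto
  have "(\<Sum>k<min i j. Th (i-k, j-k)) = Th (i,j) + (\<Sum>k<m'. Th (i - Suc k, j - Suc k))"
    unfolding m' sum.lessThan_Suc_shift by simp
  also have "Th (i,j) = 0" using zero_out nb by simp
  also have "(\<Sum>k<m'. Th (i - Suc k, j - Suc k)) = (\<Sum>k<m'. Th ((i-1) - k, (j-1) - k))"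
    by simp
  also have "\<dots> = diagsum Th (i-1) (j-1)" by (rule diagsum_ext[OF Th0']) (use m' in auto)
  finally show ?thesis using rimC by simp
qed

lemma Dg_content: "q \<in> Dg \<Longrightarrow> content q = content (i,j)"
  unfolding Dg_mem content_def by auto

lemma weight:
  "xweight (insert (i,j) S) Th2 x = xweight S Th x + of_int (rect T i j - rect T (i-1) (j-1)) * x (content (i,j))"
proof -
  let ?S' = "insert (i,j) S"
  have fin': "finite ?S'" using finS by simp
  have split: "(\<Sum>q\<in>?S'. of_int (Th2 q) * x (content q)) =
     (\<Sum>q\<in>?S'. of_int (Th q) * x (content q)) + (\<Sum>q\<in>?S'. of_int (Th2 q - Th q) * x (content q))"
    by (simp add: sum.distrib[symmetric] algebra_simps)
  have a: "(\<Sum>q\<in>?S'. of_int (Th q) * x (content q)) = xweight S Th x"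
    unfolding xweight_def using finS nb zero_out[OF nb] by simp
  have b: "(\<Sum>q\<in>?S'. of_int (Th2 q - Th q) * x (content q)) = (\<Sum>q\<in>Dg. of_int (Th2 q - Th q) * x (content q))"
    by (rule sum.mono_neutral_right) (use fin' Dg_sub tsoff in auto)
  have c: "(\<Sum>q\<in>Dg. of_int (Th2 q - Th q) * x (content q)) = (\<Sum>q\<in>Dg. of_int (Th2 q - Th q) * x (content (i,j)))"
    by (rule sum.cong) (auto simp: Dg_content)
  have d: "(\<Sum>q\<in>Dg. of_int (Th2 q - Th q)) = (of_int (\<Sum>k<min i j. Th2 (i-k, j-k) - Th (i-k, j-k)) :: 'a)"
    unfolding Dg_def by (subst sum.reindex[OF inj]) (simp add: of_int_sum)
  have e: "(\<Sum>k<min i j. Th2 (i-k, j-k) - Th (i-k, j-k)) = rect T i j - rect T (i-1) (j-1)"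
    using diag_new diag_old by (simp add: sum_subtractf)
  show ?thesis
    unfolding xweight_def split a b c using d e by (simp add: sum_distrib_right[symmetric])
qed

lemma hooks:
  "(\<Sum>q\<in>insert (i,j) S. of_nat (T q) * hook_length (insert (i,j) S) q x) =
   (\<Sum>q\<in>S. of_nat (T q) * hook_length S q x) + of_int (rect T i j - rect T (i-1) (j-1)) * x (content (i,j))"
proof -
  let ?S' = "insert (i,j) S"
  let ?xc = "x (content (i,j))"
  define cond where "cond q \<longleftrightarrow> (i = fst q \<and> snd q \<le> j) \<or> (j = snd q \<and> fst q \<le> i)" for q :: "nat \<times> nat"
  have fin': "finite ?S'" using finS by simp
  have hk: "hook ?S' q = (if cond q then insert (i,j) (hook S q) else hook S q)" for q
    unfolding hook_def cond_def by (cases q) auto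
  have nh: "(i,j) \<notin> hook S q" for q unfolding hook_def using nb by auto
  have finh: "finite (hook S q)" for q
    by (rule finite_subset[OF _ finS]) (auto simp: hook_def)
  have hl: "hook_length ?S' q x = hook_length S q x + (if cond q then ?xc else 0)" for q
    unfolding hook_length_def hk using nh finh by (simp add: add.commute)
  have h0: "hook S (i,j) = {}" unfolding hook_def using notabove by auto
  have hS: "hook_length S (i,j) x = 0" unfolding hook_length_def h0 by simp
  have "(\<Sum>q\<in>?S'. of_nat (T q) * hook_length ?S' q x) =
        (\<Sum>q\<in>?S'. of_nat (T q) * hook_length S q x) + (\<Sum>q\<in>?S'. of_nat (T q) * (if cond q then ?xc else 0))"
    unfolding hl by (simp add: sum.distrib distrib_left)
  also have "(\<Sum>q\<in>?S'. of_nat (T q) * hook_length S q x) = (\<Sum>q\<in>S. of_nat (T q) * hook_length S q x)"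
    using finS nb hS by simp
  also have "(\<Sum>q\<in>?S'. of_nat (T q) * (if cond q then ?xc else 0)) = (\<Sum>q\<in>{q\<in>?S'. cond q}. of_nat (T q) * ?xc)"
    by (subst sum.inter_filter[OF fin']) (auto intro: sum.cong)
  also have "{q\<in>?S'. cond q} = {1..i}\<times>{1..j} - {1..i-1}\<times>{1..j-1}"
  proof
    show "{q\<in>?S'. cond q} \<subseteq> {1..i}\<times>{1..j} - {1..i-1}\<times>{1..j-1}"
      using yd_pos[OF YS'] unfolding cond_def by fastforce
    show "{1..i}\<times>{1..j} - {1..i-1}\<times>{1..j-1} \<subseteq> {q\<in>?S'. cond q}"
    proof
      fix q assume q: "q \<in> {1..i}\<times>{1..j} - {1..i-1}\<times>{1..j-1}"
      obtain a b where ab: "q = (a,b)" by (cases q)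
      have r: "1 \<le> a" "a \<le> i" "1 \<le> b" "b \<le> j" "\<not> (a \<le> i-1 \<and> b \<le> j-1)"
        using q ab by auto
      have "(a,b) \<in> ?S'" by (rule below) (use r in auto)
      moreover have "cond (a,b)" unfolding cond_def using r by auto
      ultimately show "q \<in> {q\<in>?S'. cond q}" using ab by simp
    qed
  qed
  also have "(\<Sum>q\<in>{1..i}\<times>{1..j} - {1..i-1}\<times>{1..j-1}. of_nat (T q) * ?xc) =
      of_int (rect T i j - rect T (i-1) (j-1)) * ?xc"
    unfolding rect_diff by (simp add: sum_distrib_right of_int_sum)
  finally show ?thesis .
qed

lemma old_bounds:
  assumes "1 \<le> k" "k < min i j"
  shows "Th (i-k, j-k) \<le> Th (i-k, Suc (j-k))" "Th (i-k, j-k) \<le> Th (Suc (i-k), j-k)"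
    "Th (i - Suc k, j-k) \<le> Th (i-k, j-k)" "Th (i-k, j - Suc k) \<le> Th (i-k, j-k)"
proof -
  have s1: "(i-k, Suc (j-k)) \<in> S" by (rule below_S) (use assms in auto)
  have s2: "(Suc (i-k), j-k) \<in> S" by (rule below_S) (use assms in auto)
  have s3: "(i-k, j-k) \<in> S" by (rule below_S) (use assms in auto)
  have e: "Suc (i - Suc k) = i-k" "Suc (j - Suc k) = j-k" using assms by auto
  show "Th (i-k, j-k) \<le> Th (i-k, Suc (j-k))" by (rule mono_r[OF s1])
  show "Th (i-k, j-k) \<le> Th (Suc (i-k), j-k)" by (rule mono_c[OF s2])
  show "Th (i - Suc k, j-k) \<le> Th (i-k, j-k)" using mono_c[of "i - Suc k" "j-k"] s3 e by simp
  show "Th (i-k, j - Suc k) \<le> Th (i-k, j-k)" using mono_r[of "i-k" "j - Suc k"] s3 e by simp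
qed

lemma lower: "k < min i j \<Longrightarrow> max (Th (i - Suc k, j-k)) (Th (i-k, j - Suc k)) \<le> Th2 (i-k, j-k)"
proof (cases "k = 0")
  case True then show ?thesis using ts0 by simp
next
  case False
  assume k: "k < min i j"
  then have "1 \<le> k" using False by simp
  note b = old_bounds[OF this k]
  show ?thesis using tsk[OF \<open>1 \<le> k\<close> k] b by (simp add: max_def min_def)
qed

lemma upper: "1 \<le> k \<Longrightarrow> k < min i j \<Longrightarrow> Th2 (i-k, j-k) \<le> min (Th (i-k, Suc (j-k))) (Th (Suc (i-k), j-k))"
proof -
  assume k: "1 \<le> k" "k < min i j"
  show ?thesis using tsk[OF k] old_bounds[OF k] by (simp add: max_def min_def)
qed

lemma nonneg2: "0 \<le> Th2 q"
proof (cases "q \<in> Dg")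
  case True
  then obtain k where k: "k < min i j" "q = (i-k, j-k)" unfolding Dg_mem by auto
  show ?thesis using lower[OF k(1)] nonneg[of "(i - Suc k, j-k)"] k(2) by simp
next
  case False then show ?thesis using tsoff nonneg by simp
qed

lemma mono_r2: "(p, Suc q) \<in> insert (i,j) S \<Longrightarrow> Th2 (p,q) \<le> Th2 (p, Suc q)"
proof -
  assume pq: "(p, Suc q) \<in> insert (i,j) S"
  show ?thesis
  proof (cases "(p,q) \<in> Dg")
    case True
    then obtain k where k: "k < min i j" "(p,q) = (i-k, j-k)" unfolding Dg_mem by auto
    have k1: "1 \<le> k"
    proof (rule ccontr)
      assume "\<not> 1 \<le> k" then have "(p, Suc q) = (i, Suc j)" using k by auto
      then show False using pq cor1 by simp
    qed
    have nd: "(p, Suc q) \<notin> Dg" unfolding Dg_mem using k by auto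
    show ?thesis using tsoff[OF nd] upper[OF k1 k(1)] k(2) by simp
  next
    case False
    show ?thesis
    proof (cases "(p, Suc q) \<in> Dg")
      case True
      then obtain k where k: "k < min i j" "(p, Suc q) = (i-k, j-k)" unfolding Dg_mem by auto
      have e: "(p, q) = (i-k, j - Suc k)" using k by auto
      show ?thesis using tsoff[OF False] lower[OF k(1)] k(2) e by simp
    next
      case True2: False
      then have "(p, Suc q) \<in> S" using pq ij_Dg by auto
      then show ?thesis using tsoff[OF False] tsoff[OF True2] mono_r by simp
    qed
  qed
qed

lemma mono_c2: "(Suc p, q) \<in> insert (i,j) S \<Longrightarrow> Th2 (p,q) \<le> Th2 (Suc p, q)"
proof -
  assume pq: "(Suc p, q) \<in> insert (i,j) S"
  show ?thesis
  proof (cases "(p,q) \<in> Dg")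
    case True
    then obtain k where k: "k < min i j" "(p,q) = (i-k, j-k)" unfolding Dg_mem by auto
    have k1: "1 \<le> k"
    proof (rule ccontr)
      assume "\<not> 1 \<le> k" then have "(Suc p, q) = (Suc i, j)" using k by auto
      then show False using pq cor1 by simp
    qed
    have nd: "(Suc p, q) \<notin> Dg" unfolding Dg_mem using k by auto
    show ?thesis using tsoff[OF nd] upper[OF k1 k(1)] k(2) by simp
  next
    case False
    show ?thesis
    proof (cases "(Suc p, q) \<in> Dg")
      case True
      then obtain k where k: "k < min i j" "(Suc p, q) = (i-k, j-k)" unfolding Dg_mem by auto
      have e: "(p, q) = (i - Suc k, j - k)" using k by auto
      show ?thesis using tsoff[OF False] lower[OF k(1)] k(2) e by simp
    next
      case True2: False
      then have "(Suc p, q) \<in> S" using pq ij_Dg by auto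
      then show ?thesis using tsoff[OF False] tsoff[OF True2] mono_c by simp
    qed
  qed
qed

lemma rim2:
  assumes "(p,q) \<in> insert (i,j) S" "(Suc p, Suc q) \<notin> insert (i,j) S"
  shows "diagsum Th2 p q = rect T p q"
proof (cases "(p,q) = (i,j)")
  case True then show ?thesis using diag_new by (simp add: diagsum_def)
next
  case False
  then have pS: "(p,q) \<in> S" using assms(1) by blast
  have pS': "(Suc p, Suc q) \<notin> S" using assms(2) by simp
  have nd: "(p-k, q-k) \<notin> Dg" if k: "k < min p q" for k
  proof
    assume "(p-k, q-k) \<in> Dg"
    then obtain k' where k': "k' < min i j" "p - k = i - k'" "q - k = j - k'" unfolding Dg_mem by auto
    show False
    proof (cases "k \<le> k'")
      case True
      show False
      proof (cases "k = k'")
        case True then have "(p,q) = (i,j)" using k k' by auto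
        then show False using False by simp
      next
        case False
        have "(Suc p, Suc q) \<in> insert (i,j) S" by (rule below) (use k k' False \<open>k \<le> k'\<close> in auto)
        then show False using assms(2) by simp
      qed
    next
      case False
      then have "i \<le> p" "j \<le> q" using k k' by auto
      then show False using notabove[OF pS] by blast
    qed
  qed
  have "diagsum Th2 p q = diagsum Th p q"
    unfolding diagsum_def by (rule sum.cong) (use nd tsoff in auto)
  then show ?thesis using rim[OF pS pS'] by simp
qed

lemma tinv2: "tinv (insert (i,j) S) T Th2"
  unfolding tinv_def
proof (intro conjI allI impI)
  fix q assume "q \<notin> insert (i,j) S"
  then have "q \<notin> Dg" "q \<notin> S" using Dg_sub by auto
  then show "Th2 q = 0" using tsoff zero_out by simp
qed (use nonneg2 mono_r2 mono_c2 rim2 in auto)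

end

lemma main_aux:
  fixes x :: "int \<Rightarrow> 'a::comm_ring_1"
  shows "toggle S T Th \<Longrightarrow> tinv S T Th \<and> xweight S Th x = (\<Sum>b\<in>S. of_nat (T b) * hook_length S b x)"
proof (induction rule: toggle.induct)
  case (toggle_empty T) show ?case by (simp add: tinv_def xweight_def)
next
  case (toggle_add S T Th b)
  obtain i j where b: "b = (i,j)" by (cases b)
  interpret stepc S T Th i j using toggle_add b by unfold_locales auto
  have "toggle_step S Th b (int (T b)) = Th2" by (simp add: Th2_def b)
  then show ?case using tinv2 weight[of x] hooks[of x] toggle_add.IH b by simp
qed

theorem proposition3p3:
  fixes S :: "(nat \<times> nat) set" and T :: "nat \<times> nat \<Rightarrow> nat" and Th :: "nat \<times> nat \<Rightarrow> int"
    and x :: "int \<Rightarrow> 'a::comm_ring_1"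
  assumes "young_diagram S"
    and "toggle S T Th"
  shows "xweight S Th x = (\<Sum>b\<in>S. of_nat (T b) * hook_length S b x)"
  using main_aux[OF assms(2)] by blast

end
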